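(* Let $Z$ be a random variable with the standard Gumbel distribution $\mathcal{G}(0,1)$, and for $n\ge 1$ let $Z_n = \frac{T_n}{n}-\log n$, where $T_n$ is the coupon collector's completion time for $n$ coupons. Then there exists a constant $C>0$ such that for all $n\ge 2$, \[ \operatorname{dist}_{\mathrm{Lip}_{[2]}(\mathbb{R})}\big(\operatorname{law}(Z_n),\operatorname{law}(Z)\big)\le C\,\frac{\log n}{n}. \]
   Context: The standard Gumbel distribution $\mathcal{G}(0,1)$ has density $x\mapsto e^{-(x+e^{-x})}$ and cumulative distribution function $x\mapsto \exp(-\exp(-x))$ on $\mathbb{R}$. Coupon collector: let $(X_k)_{k\ge1}$ be i.i.d. uniform on $I_n=\{1,\dots,n\}$ and $T_n=\inf\{k\ge1:\{X_1,\dots,X_k\}=I_n\}$. $\mathrm{Lip}$ denotes the Lipschitz functions $\mathbb{R}\to\mathbb{R}$ with $\|f\|_{\mathrm{Lip}}=\sup_{t\ne s}|f(t)-f(s)|/|t-s|$; $\mathrm{Lip}_{[2]}(\mathbb{R})$ is the set of $f\in\mathrm{Lip}$ whose derivative $f'$ admits a Lipschitz representative, with semi-norm $\|f\|_{\mathrm{Lip}_{[2]}(\mathbb{R})}=\max(\|f\|_{\mathrm{Lip}},\|f'\|_{\mathrm{Lip}})$ (functions need not be bounded). For probability laws $\nu,\mu$ on $\mathbb{R}$ with finite first moment, $\operatorname{dist}_{\mathrm{Lip}_{[2]}(\mathbb{R})}(\nu,\mu)=\sup\{\int f\,d\nu-\int f\,d\mu : \|f\|_{\mathrm{Lip}_{[2]}(\mathbb{R})}=1\}$.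 *)

theory Defs
  imports "HOL-Probability.Probability"
begin

definition gumbel_density :: "real \<Rightarrow> real" where
  "gumbel_density x = exp (- (x + exp (- x)))"

definition gumbel_law :: "real measure" where
  "gumbel_law = density lborel (\<lambda>x. ennreal (gumbel_density x))"

text \<open>Coupon collector: X_1, X_2, ... i.i.d. uniform on {1..n}, realised as the
  canonical i.i.d. sequence space (X_k = w !! (k-1)).\<close>
definition coupon_space :: "nat \<Rightarrow> nat stream measure" where
  "coupon_space n = stream_space (measure_pmf (pmf_of_set {1..n}))"

definition coupon_time :: "nat \<Rightarrow> nat stream \<Rightarrow> nat" where
  "coupon_time n w = (LEAST k. k \<ge> 1 \<and> set (stake k w) = {1..n})"

definition Zn_law :: "nat \<Rightarrow> real measure" where
  "Zn_law n = distr (coupon_space n) borel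
     (\<lambda>w. real (coupon_time n w) / real n - ln (real n))"

definition lip_seminorm :: "(real \<Rightarrow> real) \<Rightarrow> real" where
  "lip_seminorm f = Sup {\<bar>f t - f s\<bar> / \<bar>t - s\<bar> | t s. t \<noteq> s}"

text \<open>Lip_[2](R): f Lipschitz, and f' has a Lipschitz representative
  (equivalently f is differentiable everywhere with Lipschitz derivative).\<close>
definition Lip2 :: "(real \<Rightarrow> real) set" where
  "Lip2 = {f. (\<exists>L. lipschitz_on L UNIV f) \<and>
             (\<exists>g. (\<forall>x. (f has_real_derivative g x) (at x)) \<and> (\<exists>L. lipschitz_on L UNIV g))}"

definition Lip2_norm :: "(real \<Rightarrow> real) \<Rightarrow> real" where
  "Lip2_norm f = max (lip_seminorm f) (lip_seminorm (deriv f))"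

definition dist_Lip2 :: "real measure \<Rightarrow> real measure \<Rightarrow> ereal" where
  "dist_Lip2 \<nu> \<mu> = (SUP f \<in> {f \<in> Lip2. Lip2_norm f = 1}.
       ereal (integral\<^sup>L \<nu> f - integral\<^sup>L \<mu> f))"

end

theory Submission
  imports Defs "HOL-Real_Asymp.Real_Asymp"
begin

lemma nn_FTC_Icc:
  fixes f F :: "real \<Rightarrow> real"
  assumes "a \<le> b" and f_borel: "f \<in> borel_measurable borel"
    and der: "\<And>x. a \<le> x \<Longrightarrow> x \<le> b \<Longrightarrow> (F has_real_derivative f x) (at x)"
    and nonneg: "\<And>x. a \<le> x \<Longrightarrow> x \<le> b \<Longrightarrow> 0 \<le> f x"
  shows "(\<integral>\<^sup>+x. ennreal (f x) * indicator {a..b} x \<partial>lborel) = ennreal (F b - F a)"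
proof -
  have "(f has_integral (F b - F a)) {a..b}"
    using assms by (intro fundamental_theorem_of_calculus)
      (auto simp: has_real_derivative_iff_has_vector_derivative[symmetric] intro: has_field_derivative_at_within)
  then have "((\<lambda>x. if x \<in> {a..b} then f x else 0) has_integral (F b - F a)) UNIV"
    by (simp only: has_integral_restrict_UNIV)
  then have I: "((\<lambda>x. f x * indicator {a..b} x) has_integral (F b - F a)) UNIV"
    by (rule has_integral_eq[rotated]) (auto simp: indicator_def)
  have "(\<integral>\<^sup>+x. ennreal (f x * indicator {a..b} x) \<partial>lborel) = ennreal (F b - F a)"
    by (rule nn_integral_has_integral_lborel[OF _ _ I]) (use f_borel nonneg in \<open>auto simp: indicator_def\<close>)
  moreover have "\<And>x. ennreal (f x) * indicator {a..b} x = ennreal (f x * indicator {a..b} x)"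
    by (auto simp: indicator_def)
  ultimately show ?thesis by presburger
qed

lemma nn_FTC_atMost:
  fixes f F :: "real \<Rightarrow> real"
  assumes f_borel: "f \<in> borel_measurable borel"
    and der: "\<And>x. x \<le> b \<Longrightarrow> (F has_real_derivative f x) (at x)"
    and nonneg: "\<And>x. x \<le> b \<Longrightarrow> 0 \<le> f x"
    and lim: "(F \<longlongrightarrow> A) at_bot"
  shows "(\<integral>\<^sup>+x. ennreal (f x) * indicator {..b} x \<partial>lborel) = ennreal (F b - A)"
proof -
  have "(\<integral>\<^sup>+x. ennreal (f x) * indicator {..b} x \<partial>lborel)
      = (\<integral>\<^sup>+x. ennreal (f x) * indicator {..b} x \<partial>(distr lborel borel uminus))"
    by (simp add: lborel_distr_uminus)
  also have "\<dots> = (\<integral>\<^sup>+y. ennreal (f (- y)) * indicator {..b} (- y) \<partial>lborel)"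
    using f_borel by (subst nn_integral_distr) auto
  also have "\<dots> = (\<integral>\<^sup>+y. ennreal (f (- y)) * indicator {-b..} y \<partial>lborel)"
    by (intro nn_integral_cong) (auto simp: indicator_def)
  also have "\<dots> = ennreal ((- A) - (- F (- (-b))))"
  proof (rule nn_integral_FTC_atLeast)
    show "(\<lambda>y. f (- y)) \<in> borel_measurable borel" using f_borel by measurable
    show "((\<lambda>y. - F (- y)) has_real_derivative f (- y)) (at y)" if "-b \<le> y" for y
    proof -
      have "((\<lambda>z. F (- z)) has_real_derivative f (- y) * (- 1)) (at y)"
        by (rule DERIV_chain2[OF der]) (use that in \<open>auto intro!: derivative_eq_intros\<close>)
      from DERIV_minus[OF this] show ?thesis by simp
    qed
    show "0 \<le> f (- y)" if "-b \<le> y" for y using nonneg that by auto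
    show "((\<lambda>y. - F (- y)) \<longlongrightarrow> - A) at_top"
      by (intro tendsto_minus filterlim_compose[OF lim] filterlim_uminus_at_bot_at_top)
  qed
  finally show ?thesis by simp
qed

lemma nn_FTC_line:
  fixes f F :: "real \<Rightarrow> real"
  assumes f_borel: "f \<in> borel_measurable borel"
    and der: "\<And>x. (F has_real_derivative f x) (at x)"
    and nonneg: "\<And>x. 0 \<le> f x"
    and limA: "(F \<longlongrightarrow> A) at_bot" and limB: "(F \<longlongrightarrow> B) at_top"
  shows "(\<integral>\<^sup>+x. ennreal (f x) \<partial>lborel) = ennreal (B - A)"
proof -
  have mono: "x \<le> y \<Longrightarrow> F x \<le> F y" for x y
    using der nonneg by (intro DERIV_nonneg_imp_nondecreasing[of x y F]) auto
  have A: "A \<le> F 0"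
    by (rule tendsto_upperbound[OF limA]) (auto simp: eventually_at_bot_linorder intro!: exI[of _ 0] mono)
  have B: "F 0 \<le> B"
    by (rule tendsto_lowerbound[OF limB]) (auto simp: eventually_at_top_linorder intro!: exI[of _ 0] mono)
  have "(\<integral>\<^sup>+x. ennreal (f x) \<partial>lborel) =
      (\<integral>\<^sup>+x. ennreal (f x) * indicator {..0} x + ennreal (f x) * indicator {0<..} x \<partial>lborel)"
    by (intro nn_integral_cong) (auto simp: indicator_def)
  also have "\<dots> = (\<integral>\<^sup>+x. ennreal (f x) * indicator {..0} x \<partial>lborel) + (\<integral>\<^sup>+x. ennreal (f x) * indicator {0<..} x \<partial>lborel)"
    using f_borel by (intro nn_integral_add) auto
  also have "(\<integral>\<^sup>+x. ennreal (f x) * indicator {0<..} x \<partial>lborel) = (\<integral>\<^sup>+x. ennreal (f x) * indicator {0..} x \<partial>lborel)"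
    by (intro nn_integral_cong_AE) (use AE_lborel_singleton[of 0] in \<open>auto elim!: eventually_mono simp: indicator_def\<close>)
  also have "\<dots> = ennreal (B - F 0)"
    by (rule nn_integral_FTC_atLeast[OF f_borel der nonneg limB])
  also have "(\<integral>\<^sup>+x. ennreal (f x) * indicator {..0} x \<partial>lborel) = ennreal (F 0 - A)"
    by (rule nn_FTC_atMost[OF f_borel der nonneg limA])
  also have "ennreal (F 0 - A) + ennreal (B - F 0) = ennreal (B - A)"
    using A B by (subst ennreal_plus[symmetric]) auto
  finally show ?thesis .
qed

lemma gumbel_density_nonneg: "0 \<le> gumbel_density x"
  by (simp add: gumbel_density_def)

lemma gumbel_density_borel[measurable]: "gumbel_density \<in> borel_measurable borel"
  unfolding gumbel_density_def by measurable

lemma gumbel_density_alt: "gumbel_density x = exp (- x) * exp (- exp (- x))"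
  by (simp add: gumbel_density_def exp_add[symmetric])

lemma gumbel_deriv: "((\<lambda>x. exp (- exp (- x))) has_real_derivative gumbel_density x) (at x)"
  unfolding gumbel_density_alt by (auto intro!: derivative_eq_intros)

lemma gumbel_lim_bot: "((\<lambda>x::real. exp (- exp (- x))) \<longlongrightarrow> 0) at_bot"
  by real_asymp

lemma gumbel_lim_top: "((\<lambda>x::real. exp (- exp (- x))) \<longlongrightarrow> 1) at_top"
  by real_asymp

lemma gumbel_cdf: "emeasure gumbel_law {..b} = ennreal (exp (- exp (- b)))"
  unfolding gumbel_law_def
  by (subst emeasure_density) (auto simp: nn_FTC_atMost[OF gumbel_density_borel gumbel_deriv gumbel_density_nonneg gumbel_lim_bot])

lemma gumbel_prob: "prob_space gumbel_law"
proof
  have "emeasure gumbel_law UNIV = ennreal (1 - 0)"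
    unfolding gumbel_law_def
    by (subst emeasure_density) (auto simp: nn_FTC_line[OF gumbel_density_borel gumbel_deriv gumbel_density_nonneg gumbel_lim_bot gumbel_lim_top])
  then show "emeasure gumbel_law (space gumbel_law) = 1"
    by (simp add: gumbel_law_def)
qed

lemma sets_gumbel[simp, measurable_cong]: "sets gumbel_law = sets borel"
  by (simp add: gumbel_law_def)

lemma space_gumbel[simp]: "space gumbel_law = UNIV"
  by (simp add: gumbel_law_def)

lemma gumbel_exp_moment: "(\<integral>\<^sup>+x. ennreal (exp (- x)) \<partial>gumbel_law) = 1"
proof -
  have "(\<integral>\<^sup>+x. ennreal (exp (- x)) \<partial>gumbel_law) = (\<integral>\<^sup>+x. ennreal (gumbel_density x * exp (- x)) \<partial>lborel)"
    unfolding gumbel_law_def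
    by (subst nn_integral_density) (auto simp: gumbel_density_nonneg ennreal_mult')
  also have "\<dots> = ennreal (1 - 0)"
  proof (rule nn_FTC_line[where F = "\<lambda>x. (exp (- x) + 1) * exp (- exp (- x))"])
    show "((\<lambda>x. (exp (- x) + 1) * exp (- exp (- x))) has_real_derivative gumbel_density x * exp (- x)) (at x)" for x
      unfolding gumbel_density_alt by (auto intro!: derivative_eq_intros simp: algebra_simps)
    show "((\<lambda>x::real. (exp (- x) + 1) * exp (- exp (- x))) \<longlongrightarrow> 0) at_bot" by real_asymp
    show "((\<lambda>x::real. (exp (- x) + 1) * exp (- exp (- x))) \<longlongrightarrow> 1) at_top" by real_asymp
  qed (auto simp: gumbel_density_nonneg)
  finally show ?thesis by simp
qed

lemma gumbel_abs_moment: "(\<integral>\<^sup>+x. ennreal \<bar>x\<bar> \<partial>gumbel_law) \<le> 2"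
proof -
  have "(\<integral>\<^sup>+x. ennreal \<bar>x\<bar> \<partial>gumbel_law) = (\<integral>\<^sup>+x. ennreal (gumbel_density x * \<bar>x\<bar>) \<partial>lborel)"
    unfolding gumbel_law_def
    by (subst nn_integral_density) (auto simp: gumbel_density_nonneg ennreal_mult')
  also have "\<dots> \<le> (\<integral>\<^sup>+x. ennreal (gumbel_density x * exp (- x)) + ennreal (x^1 * exp (- x)) * indicator {0..} x \<partial>lborel)"
  proof (intro nn_integral_mono)
    fix x :: real
    show "ennreal (gumbel_density x * \<bar>x\<bar>) \<le> ennreal (gumbel_density x * exp (- x)) + ennreal (x^1 * exp (- x)) * indicator {0..} x"
    proof (cases "x < 0")
      case True
      have "\<bar>x\<bar> \<le> exp (- x)" using True exp_ge_add_one_self[of "-x"] by auto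
      then have "gumbel_density x * \<bar>x\<bar> \<le> gumbel_density x * exp (- x)"
        by (intro mult_left_mono) (auto simp: gumbel_density_nonneg)
      then have "ennreal (gumbel_density x * \<bar>x\<bar>) \<le> ennreal (gumbel_density x * exp (- x))"
        by (rule ennreal_leI)
      then show ?thesis using True by (auto simp: indicator_def)
    next
      case False
      have "gumbel_density x * \<bar>x\<bar> \<le> x * exp (- x)"
        using False by (auto simp: gumbel_density_alt mult.commute intro!: mult_left_mono)
      then have "ennreal (gumbel_density x * \<bar>x\<bar>) \<le> ennreal (x^1 * exp (- x)) * indicator {0..} x"
        using False by (auto simp: indicator_def)
      then show ?thesis by (rule order_trans) (auto intro: add_increasing)
    qed
  qed
  also have "\<dots> = (\<integral>\<^sup>+x. ennreal (gumbel_density x * exp (- x)) \<partial>lborel) + (\<integral>\<^sup>+x. ennreal (x^1 * exp (- x)) * indicator {0..} x \<partial>lborel)"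
    by (intro nn_integral_add) auto
  also have "(\<integral>\<^sup>+x. ennreal (gumbel_density x * exp (- x)) \<partial>lborel) = 1"
    using gumbel_exp_moment unfolding gumbel_law_def
    by (subst (asm) nn_integral_density) (auto simp: gumbel_density_nonneg ennreal_mult')
  also have "(\<integral>\<^sup>+x. ennreal (x^1 * exp (- x)) * indicator {0..} x \<partial>lborel) = 1"
    using nn_intergal_power_times_exp_Ici[of 1] by simp
  finally show ?thesis by (simp add: one_add_one)
qed


definition Hd :: "nat \<Rightarrow> real \<Rightarrow> real" where
  "Hd n s = (if s < 0 then 0 else real n * exp (- s) * (1 - exp (- s)) ^ (n - 1))"

definition psi :: "nat \<Rightarrow> real \<Rightarrow> real" where
  "psi n x = - ln (1 - exp (- exp (- x) / real n))"

definition bt :: "nat \<Rightarrow> real \<Rightarrow> real" where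
  "bt n t = - ln (- real n * ln (1 - exp (- t)))"

lemma Hd_nonneg: "0 \<le> Hd n s"
  by (auto simp: Hd_def)

lemma Hd_borel[measurable]: "Hd n \<in> borel_measurable borel"
  unfolding Hd_def by measurable

lemma psi_borel[measurable]: "psi n \<in> borel_measurable borel"
  unfolding psi_def by measurable

lemma psi_pos:
  assumes "n \<ge> 1" shows "0 < psi n x"
proof -
  have "0 < exp (- x) / real n" using assms by auto
  then have "exp (- exp (- x) / real n) < 1" by simp
  moreover have "0 < exp (- exp (- x) / real n)" by simp
  ultimately show ?thesis unfolding psi_def by (simp add: ln_less_zero)
qed

lemma psi_le_iff:
  assumes n: "n \<ge> 1" and t: "0 < t"
  shows "psi n x \<le> t \<longleftrightarrow> x \<le> bt n t"
proof -
  define v where "v = exp (- x) / real n"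
  define c where "c = 1 - exp (- t)"
  have v: "0 < v" using n by (auto simp: v_def)
  have c: "0 < c" "c < 1" using t by (auto simp: c_def)
  have e: "0 < exp (- v)" "exp (- v) < 1" using v by auto
  have lnc: "ln c < 0" using c by simp
  have "psi n x \<le> t \<longleftrightarrow> - t \<le> ln (1 - exp (- v))"
    by (auto simp: psi_def v_def)
  also have "\<dots> \<longleftrightarrow> exp (- t) \<le> 1 - exp (- v)"
    using e by (subst ln_ge_iff) auto
  also have "\<dots> \<longleftrightarrow> exp (- v) \<le> c"
    by (auto simp: c_def)
  also have "\<dots> \<longleftrightarrow> - v \<le> ln c"
    using c by (metis exp_le_cancel_iff exp_ln)
  also have "\<dots> \<longleftrightarrow> - real n * ln c \<le> exp (- x)"
    using n by (auto simp: v_def field_simps)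
  also have "\<dots> \<longleftrightarrow> ln (- real n * ln c) \<le> ln (exp (- x))"
  proof -
    have "0 < - real n * ln c" using n lnc by (auto intro!: mult_pos_neg)
    then show ?thesis by (subst ln_le_cancel_iff) auto
  qed
  also have "\<dots> \<longleftrightarrow> ln (- real n * ln c) \<le> - x" by simp
  also have "\<dots> \<longleftrightarrow> x \<le> bt n t"
    by (auto simp: bt_def c_def)
  finally show ?thesis .
qed

lemma exp_bt:
  assumes n: "n \<ge> 1" and t: "0 < t"
  shows "exp (- exp (- bt n t)) = (1 - exp (- t)) ^ n"
proof -
  define c where "c = 1 - exp (- t)"
  have c: "0 < c" "c < 1" using t by (auto simp: c_def)
  have pos: "0 < - real n * ln c" using n c by (auto intro!: mult_pos_neg)
  have "exp (- bt n t) = - real n * ln c"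
    using pos by (simp add: bt_def c_def)
  then have "exp (- exp (- bt n t)) = exp (real n * ln c)" by simp
  also have "\<dots> = c ^ n" using c by (simp add: exp_of_nat_mult)
  finally show ?thesis by (simp add: c_def)
qed

definition Fc :: "nat \<Rightarrow> real \<Rightarrow> real" where
  "Fc n t = (if t \<le> 0 then 0 else (1 - exp (- t)) ^ n)"

lemma emeasure_distr_psi:
  assumes n: "n \<ge> 1"
  shows "emeasure (distr gumbel_law borel (psi n)) {..t} = ennreal (Fc n t)"
proof (cases "t \<le> 0")
  case True
  have "\<not> psi n x \<le> t" for x using psi_pos[OF n, of x] True by linarith
  then have "psi n -` {..t} = {}" by auto
  then show ?thesis using True by (subst emeasure_distr) (auto simp: Fc_def)
next
  case False
  then have "psi n -` {..t} = {..bt n t}" using psi_le_iff[OF n, of t] by auto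
  then show ?thesis using False exp_bt[OF n, of t]
    by (subst emeasure_distr) (auto simp: Fc_def gumbel_cdf)
qed

lemma emeasure_Hd:
  assumes n: "n \<ge> 1"
  shows "emeasure (density lborel (\<lambda>s. ennreal (Hd n s))) {..t} = ennreal (Fc n t)"
proof (cases "t < 0")
  case True
  have z: "\<And>s. ennreal (Hd n s) * indicator {..t} s = 0" using True by (auto simp: Hd_def indicator_def)
  have "emeasure (density lborel (\<lambda>s. ennreal (Hd n s))) {..t} = 0"
    by (subst emeasure_density) (auto simp: z)
  then show ?thesis using True by (simp add: Fc_def)
next
  case False
  have "emeasure (density lborel (\<lambda>s. ennreal (Hd n s))) {..t} =
     (\<integral>\<^sup>+s. ennreal (real n * exp (- s) * (1 - exp (- s)) ^ (n - 1)) * indicator {0..t} s \<partial>lborel)"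
    by (subst emeasure_density) (auto intro!: nn_integral_cong simp: Hd_def indicator_def)
  also have "\<dots> = ennreal ((1 - exp (- t)) ^ n - (1 - exp (- 0)) ^ n)"
  proof (rule nn_FTC_Icc)
    show "((\<lambda>s. (1 - exp (- s)) ^ n) has_real_derivative real n * exp (- s) * (1 - exp (- s)) ^ (n - 1)) (at s)" for s
      by (auto intro!: derivative_eq_intros simp: algebra_simps)
  qed (use False in auto)
  finally show ?thesis using False n by (auto simp: Fc_def)
qed

lemma Hd_distr:
  assumes n: "n \<ge> 1"
  shows "density lborel (\<lambda>s. ennreal (Hd n s)) = distr gumbel_law borel (psi n)"
proof (rule cdf_unique)
  interpret G: prob_space gumbel_law by (rule gumbel_prob)
  have lim0: "((\<lambda>t::real. 1 - exp (- t)) \<longlongrightarrow> 1) at_top"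
    by real_asymp
  have lim: "((\<lambda>t::real. (1 - exp (- t)) ^ n) \<longlongrightarrow> 1) at_top"
    using tendsto_power[OF lim0, of n] by simp
  show "real_distribution (distr gumbel_law borel (psi n))"
    unfolding real_distribution_def
    by (auto intro!: G.prob_space_distr simp: real_distribution_axioms_def)
  have "emeasure (density lborel (\<lambda>s. ennreal (Hd n s))) UNIV = (\<integral>\<^sup>+s. ennreal (Hd n s) * indicator {0..} s \<partial>lborel)"
    by (subst emeasure_density) (auto intro!: nn_integral_cong simp: Hd_def indicator_def)
  also have "\<dots> = ennreal (1 - (1 - exp (- 0)) ^ n)"
  proof (rule nn_integral_FTC_atLeast[OF Hd_borel _ _ lim])
    show "((\<lambda>s. (1 - exp (- s)) ^ n) has_real_derivative Hd n s) (at s)" if "0 \<le> s" for s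
    proof -
      have "((\<lambda>s. (1 - exp (- s)) ^ n) has_real_derivative real n * exp (- s) * (1 - exp (- s)) ^ (n - 1)) (at s)"
        by (auto intro!: derivative_eq_intros simp: algebra_simps)
      then show ?thesis using that by (simp add: Hd_def)
    qed
  qed (auto simp: Hd_nonneg)
  finally have "emeasure (density lborel (\<lambda>s. ennreal (Hd n s))) UNIV = 1" using n by simp
  then show "real_distribution (density lborel (\<lambda>s. ennreal (Hd n s)))"
    unfolding real_distribution_def real_distribution_axioms_def
    by (auto intro!: prob_spaceI)
  show "cdf (density lborel (\<lambda>s. ennreal (Hd n s))) = cdf (distr gumbel_law borel (psi n))"
  proof
    fix t
    have "0 \<le> Fc n t" by (auto simp: Fc_def)
    then show "cdf (density lborel (\<lambda>s. ennreal (Hd n s))) t = cdf (distr gumbel_law borel (psi n)) t"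
      unfolding cdf_def measure_def by (simp add: emeasure_Hd[OF n] emeasure_distr_psi[OF n])
  qed
qed

lemma psi_approx:
  assumes n: "n \<ge> 1"
  shows "\<bar>psi n x - ln (real n) - x\<bar> \<le> exp (- x) / real n"
proof -
  define v where "v = exp (- x) / real n"
  have v: "0 < v" using n by (auto simp: v_def)
  have lnv: "ln v = - x - ln (real n)"
    using n by (simp add: v_def ln_div)
  have d: "0 < 1 - exp (- v)" using v by simp
  have "psi n x - ln (real n) - x = ln v - ln (1 - exp (- v))"
    by (simp add: psi_def v_def[symmetric] lnv)
  also have "\<dots> = ln (v / (1 - exp (- v)))" using v d by (simp add: ln_div)
  finally have eq: "psi n x - ln (real n) - x = ln (v / (1 - exp (- v)))" .
  have "1 - exp (- v) \<le> v" using exp_ge_add_one_self[of "-v"] by simp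
  then have r1: "1 \<le> v / (1 - exp (- v))" using d by simp
  have v1: "v + 1 \<le> exp v" using exp_ge_add_one_self[of v] by linarith
  then have v2: "(v + 1) * exp v \<le> exp v * exp v" by (intro mult_right_mono) auto
  from v1 have "v * exp (- v) \<le> 1 - exp (- v)"
    by (simp add: exp_minus field_simps)
  then have "v / (1 - exp (- v)) \<le> exp v"
    using d v2 by (simp add: exp_minus field_simps)
  then have r2: "ln (v / (1 - exp (- v))) \<le> v"
    using r1 by (metis ln_exp ln_le_cancel_iff exp_gt_zero less_le_trans zero_less_one)
  have "0 \<le> ln (v / (1 - exp (- v)))" using r1 by simp
  then show ?thesis using eq r2 by (simp add: v_def)
qed


lemma card_lists_Suc:
  assumes A: "finite A"
  shows "card {ys. length ys = Suc m \<and> set ys \<subseteq> A \<and> Q ys} =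
         (\<Sum>t\<in>A. card {xs. length xs = m \<and> set xs \<subseteq> A \<and> Q (t # xs)})"
proof -
  have fin: "finite {xs. length xs = m \<and> set xs \<subseteq> A \<and> Q (t # xs)}" for t
    by (rule finite_subset[OF _ finite_lists_length_eq[OF A, of m]]) auto
  have eq: "{ys. length ys = Suc m \<and> set ys \<subseteq> A \<and> Q ys} =
      (\<Union>t\<in>A. (\<lambda>xs. t # xs) ` {xs. length xs = m \<and> set xs \<subseteq> A \<and> Q (t # xs)})"
  proof (intro equalityI subsetI)
    fix ys assume "ys \<in> {ys. length ys = Suc m \<and> set ys \<subseteq> A \<and> Q ys}"
    then obtain t xs where "ys = t # xs" "length xs = m" "t \<in> A" "set xs \<subseteq> A" "Q (t # xs)"
      by (cases ys) auto
    then show "ys \<in> (\<Union>t\<in>A. (\<lambda>xs. t # xs) ` {xs. length xs = m \<and> set xs \<subseteq> A \<and> Q (t # xs)})"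
      by auto
  qed auto
  show ?thesis
    unfolding eq
    by (subst card_UN_disjoint) (auto simp: A fin card_image)
qed

lemma alt_sum_subsets:
  fixes A B :: "'a set"
  assumes A: "finite A" and B: "B \<subseteq> A"
  shows "(\<Sum>S\<in>Pow A. if B \<subseteq> S then (-1::real) ^ card (A - S) else 0) = (if B = A then 1 else 0)"
proof -
  define f2 where "f2 x = (if x \<in> B then 0 else (-1::real))" for x
  have "(\<Prod>x\<in>A. 1 + f2 x) = (\<Sum>X\<in>Pow A. (\<Prod>x\<in>X. 1) * (\<Prod>x\<in>A - X. f2 x))"
    by (rule prod_add[OF A])
  also have "\<dots> = (\<Sum>S\<in>Pow A. if B \<subseteq> S then (-1::real) ^ card (A - S) else 0)"
  proof (rule sum.cong[OF refl])
    fix X assume X: "X \<in> Pow A"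
    show "(\<Prod>x\<in>X. 1) * (\<Prod>x\<in>A - X. f2 x) = (if B \<subseteq> X then (-1::real) ^ card (A - X) else 0)"
    proof (cases "B \<subseteq> X")
      case True
      then have "(\<Prod>x\<in>A - X. f2 x) = (\<Prod>x\<in>A - X. -1)"
        by (intro prod.cong) (auto simp: f2_def)
      then show ?thesis using True by simp
    next
      case False
      then obtain x where "x \<in> B" "x \<notin> X" by auto
      then have "x \<in> A - X" "f2 x = 0" using B by (auto simp: f2_def)
      then have "(\<Prod>x\<in>A - X. f2 x) = 0" using A by (intro prod_zero) auto
      then show ?thesis using False by simp
    qed
  qed
  finally have eq: "(\<Prod>x\<in>A. 1 + f2 x) = (\<Sum>S\<in>Pow A. if B \<subseteq> S then (-1::real) ^ card (A - S) else 0)" .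
  show ?thesis
  proof (cases "B = A")
    case True
    then have "(\<Prod>x\<in>A. 1 + f2 x) = 1" by (auto simp: f2_def)
    then show ?thesis using eq True by simp
  next
    case False
    then obtain x where "x \<in> A" "x \<notin> B" using B by auto
    then have "(\<Prod>x\<in>A. 1 + f2 x) = 0" using A by (intro prod_zero) (auto simp: f2_def)
    then show ?thesis using eq False by simp
  qed
qed

lemma card_filter_sum: "finite X \<Longrightarrow> real (card {x\<in>X. P x}) = (\<Sum>x\<in>X. if P x then 1 else 0)"
  using sum.inter_filter[of X "\<lambda>_. 1::real" P] by simp

lemma incl_excl_surj:
  fixes A :: "'a set"
  assumes A: "finite A"
  shows "real (card {xs. length xs = m \<and> set xs \<subseteq> A \<and> set xs = A}) =
         (\<Sum>S\<in>Pow A. (-1) ^ card (A - S) * real (card S) ^ m)"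
proof -
  define Ls where "Ls = {xs. length xs = m \<and> set xs \<subseteq> A}"
  have finLs: "finite Ls" unfolding Ls_def
    by (rule finite_subset[OF _ finite_lists_length_eq[OF A, of m]]) auto
  have cS: "real (card S) ^ m = (\<Sum>xs\<in>Ls. if set xs \<subseteq> S then 1 else 0)" if "S \<subseteq> A" for S
  proof -
    have fS: "finite S" using that A by (rule finite_subset)
    have "{xs. set xs \<subseteq> S \<and> length xs = m} = {xs\<in>Ls. set xs \<subseteq> S}"
      using that by (auto simp: Ls_def)
    then have "card S ^ m = card {xs\<in>Ls. set xs \<subseteq> S}"
      using card_lists_length_eq[OF fS, of m] by simp
    then show ?thesis
      using card_filter_sum[OF finLs, of "\<lambda>xs. set xs \<subseteq> S"] by (metis of_nat_power)
  qed
  have "(\<Sum>S\<in>Pow A. (-1) ^ card (A - S) * real (card S) ^ m) =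
        (\<Sum>S\<in>Pow A. \<Sum>xs\<in>Ls. (if set xs \<subseteq> S then (-1) ^ card (A - S) else 0))"
    by (intro sum.cong refl) (auto simp: cS sum_distrib_left intro!: sum.cong)
  also have "\<dots> = (\<Sum>xs\<in>Ls. \<Sum>S\<in>Pow A. (if set xs \<subseteq> S then (-1) ^ card (A - S) else 0))"
    by (rule sum.swap)
  also have "\<dots> = (\<Sum>xs\<in>Ls. if set xs = A then 1 else 0)"
    by (intro sum.cong refl alt_sum_subsets[OF A]) (auto simp: Ls_def)
  also have "\<dots> = real (card {xs\<in>Ls. set xs = A})"
    using card_filter_sum[OF finLs] by simp
  finally show ?thesis by (simp add: Ls_def)
qed

lemma exp_alt_sum:
  fixes A :: "'a set"
  assumes A: "finite A"
  shows "(\<Sum>S\<in>Pow A. (-1) ^ card (A - S) * exp (real (card S) * s)) = (exp s - 1) ^ card A"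
proof -
  have "(\<Prod>x\<in>A. exp s + (-1::real)) = (\<Sum>X\<in>Pow A. (\<Prod>x\<in>X. exp s) * (\<Prod>x\<in>A - X. -1))"
    by (rule prod_add[OF A])
  then show ?thesis by (simp add: exp_of_nat_mult[symmetric] mult.commute)
qed

lemma deriv_alt_sum:
  fixes A :: "'a set"
  assumes A: "finite A"
  shows "(\<Sum>S\<in>Pow A. (-1) ^ card (A - S) * real (card (A - S)) * exp (real (card S) * s))
         = - real (card A) * (exp s - 1) ^ (card A - 1)"
proof -
  define x where "x = exp s"
  have P: "(\<Sum>X\<in>Pow A. x ^ card X * y ^ card (A - X)) = (x + y) ^ card A" for y :: real
  proof -
    have "(\<Prod>a\<in>A. x + y) = (\<Sum>X\<in>Pow A. (\<Prod>a\<in>X. x) * (\<Prod>a\<in>A - X. y))"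
      by (rule prod_add[OF A])
    then show ?thesis by simp
  qed
  have D1: "((\<lambda>y. \<Sum>X\<in>Pow A. x ^ card X * y ^ card (A - X)) has_real_derivative
        (\<Sum>X\<in>Pow A. x ^ card X * (real (card (A - X)) * y ^ (card (A - X) - 1)))) (at y)" for y :: real
    by (auto intro!: derivative_eq_intros sum.cong)
  have D2: "((\<lambda>y. \<Sum>X\<in>Pow A. x ^ card X * y ^ card (A - X)) has_real_derivative
        real (card A) * (x + y) ^ (card A - 1)) (at y)" for y :: real
    unfolding P by (auto intro!: derivative_eq_intros)
  have E: "(\<Sum>X\<in>Pow A. x ^ card X * (real (card (A - X)) * (-1) ^ (card (A - X) - 1)))
      = real (card A) * (x - 1) ^ (card A - 1)"
    using DERIV_unique[OF D1[of "-1"] D2[of "-1"]] by simp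
  have "(\<Sum>S\<in>Pow A. (-1) ^ card (A - S) * real (card (A - S)) * exp (real (card S) * s))
      = - (\<Sum>X\<in>Pow A. x ^ card X * (real (card (A - X)) * (-1) ^ (card (A - X) - 1)))"
    unfolding sum_negf[symmetric]
  proof (intro sum.cong refl)
    fix X assume "X \<in> Pow A"
    show "(-1) ^ card (A - X) * real (card (A - X)) * exp (real (card X) * s) =
          - (x ^ card X * (real (card (A - X)) * (-1) ^ (card (A - X) - 1)))"
      by (cases "card (A - X)") (auto simp: x_def exp_of_nat_mult)
  qed
  then show ?thesis using E by (simp add: x_def)
qed


lemma set_stake_eq: "set (stake j w) = (\<lambda>i. w !! i) ` {..<j}"
proof (intro equalityI subsetI)
  fix x assume "x \<in> set (stake j w)"
  then obtain i where "i < j" "x = stake j w ! i" by (auto simp: in_set_conv_nth)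
  then show "x \<in> (\<lambda>i. w !! i) ` {..<j}" by auto
next
  fix x assume "x \<in> (\<lambda>i. w !! i) ` {..<j}"
  then obtain i where "i < j" "x = w !! i" by auto
  then have "x = stake j w ! i" by simp
  then show "x \<in> set (stake j w)" using \<open>i < j\<close> by (auto simp: in_set_conv_nth)
qed

lemma meas_stake_pmf: fixes p :: "'a::countable pmf" shows "stake m \<in> measurable (stream_space (measure_pmf p)) (count_space UNIV)"
proof -
  have "sets (stream_space (measure_pmf p)) = sets (stream_space (count_space UNIV))"
    by (rule sets_stream_space_cong) simp
  note eq = this
  show ?thesis
    by (subst measurable_cong_sets[OF eq refl]) (rule measurable_stake)
qed

lemma pred_stake_pmf[measurable]: fixes p :: "'a::countable pmf" shows "Measurable.pred (stream_space (measure_pmf p)) (\<lambda>w. Q (stake m w))"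
  by (rule measurable_compose[OF meas_stake_pmf]) simp

lemma stake_prob:
  fixes A :: "'a::countable set"
  assumes A: "finite A" "A \<noteq> {}"
  shows "measure (stream_space (measure_pmf (pmf_of_set A))) {w\<in>space (stream_space (measure_pmf (pmf_of_set A))). Q (stake m w)}
      = real (card {xs. length xs = m \<and> set xs \<subseteq> A \<and> Q xs}) / real (card A) ^ m"
proof (induction m arbitrary: Q)
  case 0
  interpret S: prob_space "stream_space (measure_pmf (pmf_of_set A))"
    by (rule prob_space.prob_space_stream_space[OF prob_space_measure_pmf])
  show ?case
  proof (cases "Q []")
    case True
    then have "{xs. length xs = 0 \<and> set xs \<subseteq> A \<and> Q xs} = {[]}" by auto
    then show ?thesis using True by (simp add: S.prob_space)
  next
    case False
    then have "{xs. length xs = 0 \<and> set xs \<subseteq> A \<and> Q xs} = {}" by auto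
    then show ?thesis using False by simp
  qed
next
  case (Suc m)
  define c where "c t = real (card {xs. length xs = m \<and> set xs \<subseteq> A \<and> Q (t # xs)})" for t
  have cA: "0 < real (card A)" using A by (simp add: card_gt_0_iff)
  have "ennreal (measure (stream_space (measure_pmf (pmf_of_set A))) {w\<in>space (stream_space (measure_pmf (pmf_of_set A))). Q (stake (Suc m) w)})
     = (\<integral>\<^sup>+t. ennreal (measure (stream_space (measure_pmf (pmf_of_set A))) {x\<in>space (stream_space (measure_pmf (pmf_of_set A))). Q (stake (Suc m) (t ## x))}) \<partial>measure_pmf (pmf_of_set A))"
    by (rule prob_space.prob_stream_space[OF prob_space_measure_pmf]) measurable
  also have "\<dots> = (\<integral>\<^sup>+t. ennreal (c t / real (card A) ^ m) \<partial>measure_pmf (pmf_of_set A))"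
    using Suc.IH[of "\<lambda>xs. Q (_ # xs)"] by (simp add: c_def)
  also have "\<dots> = (\<Sum>t\<in>A. ennreal (c t / real (card A) ^ m)) / card A"
    by (rule nn_integral_pmf_of_set[OF A(2,1)])
  also have "\<dots> = ennreal ((\<Sum>t\<in>A. c t) / real (card A) ^ m) / ennreal (real (card A))"
    by (subst sum_ennreal) (auto simp: c_def sum_divide_distrib[symmetric] ennreal_of_nat_eq_real_of_nat)
  also have "\<dots> = ennreal ((\<Sum>t\<in>A. c t) / real (card A) ^ m / real (card A))"
    by (rule divide_ennreal) (use cA in \<open>auto simp: c_def intro!: sum_nonneg divide_nonneg_nonneg\<close>)
  also have "(\<Sum>t\<in>A. c t) = real (card {ys. length ys = Suc m \<and> set ys \<subseteq> A \<and> Q ys})"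
    unfolding c_def card_lists_Suc[OF A(1)] by simp
  finally show ?case
    using cA by (subst (asm) ennreal_inj) (auto simp: field_simps)
qed

locale cc =
  fixes n :: nat
  assumes n2: "2 \<le> n"
begin

abbreviation "AA \<equiv> {1..n}"
abbreviation "MM \<equiv> coupon_space n"
abbreviation "TT \<equiv> coupon_time n"

definition cov :: "nat \<Rightarrow> nat stream \<Rightarrow> bool" where
  "cov m w \<longleftrightarrow> set (stake m w) = AA"

definition q :: "nat \<Rightarrow> real" where
  "q m = (\<Sum>S\<in>Pow AA. (-1) ^ card (AA - S) * (real (card S) / real n) ^ m)"

lemma n_pos: "0 < n" using n2 by simp

lemma AA_ne: "AA \<noteq> {}" using n2 by simp

lemma prob_MM: "prob_space MM"
  unfolding coupon_space_def by (rule prob_space.prob_space_stream_space[OF prob_space_measure_pmf])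

sublocale P: prob_space MM by (rule prob_MM)

lemma pred_cov[measurable]: "Measurable.pred MM (cov m)"
  unfolding cov_def[abs_def] coupon_space_def by measurable

lemma space_MM: "space MM = UNIV"
  by (simp add: coupon_space_def space_stream_space)

lemma prob_cov: "measure MM {w\<in>space MM. cov m w} = q m"
proof -
  have "measure MM {w\<in>space MM. cov m w} = real (card {xs. length xs = m \<and> set xs \<subseteq> AA \<and> set xs = AA}) / real (card AA) ^ m"
    unfolding coupon_space_def cov_def using AA_ne by (intro stake_prob) auto
  also have "\<dots> = q m"
    unfolding incl_excl_surj[OF finite_atLeastAtMost] q_def
    by (simp add: sum_divide_distrib power_divide)
  finally show ?thesis .
qed

lemma AE_good: "AE w in MM. \<forall>i. w !! i \<in> AA"
proof -
  have sp: "set_pmf (pmf_of_set AA) = AA" by (rule set_pmf_of_set[OF AA_ne finite_atLeastAtMost])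
  have "AE w in MM. stream_all (\<lambda>x. x \<in> AA) w"
    unfolding coupon_space_def
    by (rule prob_space.AE_stream_all[OF prob_space_measure_pmf]) (use sp in \<open>simp_all add: AE_measure_pmf_iff\<close>)
  then show ?thesis by (rule eventually_mono) (simp add: stream_all_def)
qed

lemma q_lim: "q \<longlonglongrightarrow> 1"
proof -
  have "q = (\<lambda>m. (\<Sum>S\<in>Pow AA. (-1) ^ card (AA - S) * (real (card S) / real n) ^ m))"
    by (simp add: q_def[abs_def])
  moreover have "(\<lambda>m. (\<Sum>S\<in>Pow AA. (-1) ^ card (AA - S) * (real (card S) / real n) ^ m))
      \<longlonglongrightarrow> (\<Sum>S\<in>Pow AA. if S = AA then 1 else 0)"
  proof (intro tendsto_sum)
    fix S assume S: "S \<in> Pow AA"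
    show "(\<lambda>m. (-1) ^ card (AA - S) * (real (card S) / real n) ^ m) \<longlonglongrightarrow> (if S = AA then 1 else 0)"
    proof (cases "S = AA")
      case True then show ?thesis using n_pos by simp
    next
      case False
      then have "S \<subset> AA" using S by auto
      then have "card S < card AA" by (intro psubset_card_mono) auto
      then have "real (card S) / real n < 1" using n_pos by simp
      then have "(\<lambda>m. (real (card S) / real n) ^ m) \<longlonglongrightarrow> 0"
        by (intro LIMSEQ_power_zero) auto
      then show ?thesis using False by (auto intro: tendsto_mult_right_zero)
    qed
  qed
  ultimately show ?thesis by simp
qed

lemma AE_evcov: "AE w in MM. \<exists>k. cov k w"
proof -
  let ?N = "{w\<in>space MM. \<not> (\<exists>k. cov k w)}"
  have N: "?N \<in> sets MM" by measurable
  have le: "measure MM ?N \<le> 1 - q k" for k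
  proof -
    have "measure MM ?N \<le> measure MM (space MM - {w\<in>space MM. cov k w})"
      by (intro P.finite_measure_mono) auto
    also have "\<dots> = 1 - q k"
      by (subst P.prob_compl) (auto simp: prob_cov)
    finally show ?thesis .
  qed
  have "measure MM ?N \<le> 1 - 1"
    by (rule LIMSEQ_le_const[OF tendsto_diff[OF tendsto_const q_lim]]) (use le in auto)
  moreover have "0 \<le> measure MM ?N" by (rule measure_nonneg)
  ultimately have "measure MM ?N = 0" by linarith
  then show ?thesis
    by (subst AE_iff_measurable[OF N refl]) (simp add: P.emeasure_eq_measure)
qed

lemma T_meas[measurable]: "TT \<in> measurable MM (count_space UNIV)"
  unfolding coupon_time_def[abs_def] coupon_space_def by measurable

lemma cov_mono:
  assumes good: "\<forall>i. w !! i \<in> AA" and "i \<le> j" "cov i w"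
  shows "cov j w"
proof -
  have "set (stake i w) \<subseteq> set (stake j w)"
    using \<open>i \<le> j\<close> by (auto simp: set_stake_eq)
  moreover have "set (stake j w) \<subseteq> AA" using good by (auto simp: set_stake_eq)
  ultimately show ?thesis using \<open>cov i w\<close> by (auto simp: cov_def)
qed

lemma cov0: "\<not> cov 0 w"
  using AA_ne by (simp add: cov_def)

lemma T_char: "AE w in MM. (TT w = j \<longleftrightarrow> (1 \<le> j \<and> cov j w \<and> \<not> cov (j - 1) w))"
  using AE_good AE_evcov
proof eventually_elim
  case (elim w)
  then obtain k where k: "cov k w" by auto
  have T: "TT w = (LEAST k. 1 \<le> k \<and> cov k w)" by (simp add: coupon_time_def cov_def)
  have ex: "\<exists>k. 1 \<le> k \<and> cov k w"
    using k cov0[of w] by (cases k) auto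
  show ?case
  proof
    assume Tj: "TT w = j"
    have P: "1 \<le> j \<and> cov j w" using LeastI_ex[OF ex] Tj T by simp
    have "\<not> cov (j - 1) w"
    proof
      assume c: "cov (j - 1) w"
      then have "1 \<le> j - 1" using cov0[of w] by (cases "j - 1") auto
      then have "TT w \<le> j - 1" unfolding T using c by (intro Least_le) auto
      moreover have "1 \<le> j" using P by simp
      ultimately show False using Tj by linarith
    qed
    then show "1 \<le> j \<and> cov j w \<and> \<not> cov (j - 1) w" using P by simp
  next
    assume j: "1 \<le> j \<and> cov j w \<and> \<not> cov (j - 1) w"
    show "TT w = j"
      unfolding T
    proof (rule Least_equality)
      show "1 \<le> j \<and> cov j w" using j by simp
      fix y assume y: "1 \<le> y \<and> cov y w"
      show "j \<le> y"
      proof (rule ccontr)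
        assume "\<not> j \<le> y"
        then have "y \<le> j - 1" by simp
        then have "cov (j - 1) w" using cov_mono[OF elim(1) _ ] y by blast
        then show False using j by simp
      qed
    qed
  qed
qed

definition p :: "nat \<Rightarrow> real" where
  "p j = measure MM {w\<in>space MM. TT w = j}"

lemma p_formula: "p j = (if j = 0 then 0 else q j - q (j - 1))"
proof -
  have "p j = measure MM {w\<in>space MM. 1 \<le> j \<and> cov j w \<and> \<not> cov (j - 1) w}"
    unfolding p_def by (rule measure_eq_AE) (use T_char[of j] in \<open>auto elim!: eventually_mono\<close>)
  also have "\<dots> = (if j = 0 then 0 else q j - q (j - 1))"
  proof (cases "j = 0")
    case True then show ?thesis by simp
  next
    case False
    have "measure MM {w\<in>space MM. 1 \<le> j \<and> cov j w \<and> \<not> cov (j - 1) w}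
        = measure MM ({w\<in>space MM. cov j w} - {w\<in>space MM. cov (j - 1) w})"
      using False by (intro arg_cong[where f="measure MM"]) auto
    also have "\<dots> = measure MM {w\<in>space MM. cov j w} - measure MM ({w\<in>space MM. cov j w} \<inter> {w\<in>space MM. cov (j - 1) w})"
      by (rule P.finite_measure_Diff') auto
    also have "measure MM ({w\<in>space MM. cov j w} \<inter> {w\<in>space MM. cov (j - 1) w}) = measure MM {w\<in>space MM. cov (j - 1) w}"
      by (rule measure_eq_AE) (use AE_good in \<open>auto elim!: eventually_mono intro: cov_mono[of _ "j - 1" j]\<close>)
    finally show ?thesis using False by (simp add: prob_cov)
  qed
  finally show ?thesis .
qed

lemma p_nonneg: "0 \<le> p j" by (simp add: p_def)

end


lemma term_alg:
  fixes k nn s e :: real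
  assumes "0 < nn"
  shows "((k / nn) ^ Suc j - (k / nn) ^ j) * (nn ^ Suc j * s ^ j * e / fact j) = e * ((k - nn) * ((k * s) ^ j / fact j))"
proof -
  have "(k / nn) ^ j * nn ^ j = k ^ j" using assms by (simp add: power_divide)
  then show ?thesis using assms by (simp add: field_simps power_mult_distrib)
qed

lemma exp_sums_real: "(\<lambda>j. (x::real) ^ j / fact j) sums exp x"
  using exp_converges[of x] by (simp add: divide_inverse mult.commute)

context cc
begin

definition ww :: "nat set \<Rightarrow> real" where "ww S = (-1) ^ card (AA - S)"

lemma p_Suc: "p (Suc j) = q (Suc j) - q j"
  by (simp add: p_formula)

lemma series_Hd:
  assumes s: "0 \<le> s"
  shows "(\<lambda>j. p (Suc j) * erlang_density j (real n) s) sums Hd n s"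
proof -
  have trm: "p (Suc j) * erlang_density j (real n) s =
      exp (- real n * s) * (\<Sum>S\<in>Pow AA. ww S * ((real (card S) - real n) * ((real (card S) * s) ^ j / fact j)))" for j
  proof -
    have pe: "p (Suc j) = (\<Sum>S\<in>Pow AA. ww S * ((real (card S) / real n) ^ Suc j - (real (card S) / real n) ^ j))"
      unfolding p_Suc q_def ww_def by (simp add: sum_subtractf[symmetric] right_diff_distrib)
    have ee: "erlang_density j (real n) s = real n ^ Suc j * s ^ j * exp (- real n * s) / fact j"
      using s by (simp add: erlang_density_def)
    have "p (Suc j) * erlang_density j (real n) s =
        (\<Sum>S\<in>Pow AA. ww S * (((real (card S) / real n) ^ Suc j - (real (card S) / real n) ^ j) *
          (real n ^ Suc j * s ^ j * exp (- real n * s) / fact j)))"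
      unfolding pe ee sum_distrib_right by (simp only: mult.assoc)
    also have "\<dots> = (\<Sum>S\<in>Pow AA. ww S * (exp (- real n * s) * ((real (card S) - real n) * ((real (card S) * s) ^ j / fact j))))"
    proof -
      have np: "0 < real n" using n_pos by simp
      show ?thesis by (intro sum.cong refl) (simp only: term_alg[OF np])
    qed
    finally show ?thesis by (simp add: sum_distrib_left mult.left_commute)
  qed
  have S: "(\<lambda>j. (\<Sum>S\<in>Pow AA. ww S * ((real (card S) - real n) * ((real (card S) * s) ^ j / fact j))))
      sums (\<Sum>S\<in>Pow AA. ww S * ((real (card S) - real n) * exp (real (card S) * s)))"
    by (intro sums_sum sums_mult exp_sums_real)
  have val: "(\<Sum>S\<in>Pow AA. ww S * ((real (card S) - real n) * exp (real (card S) * s)))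
      = real n * (exp s - 1) ^ (n - 1)"
  proof -
    have "(\<Sum>S\<in>Pow AA. ww S * ((real (card S) - real n) * exp (real (card S) * s)))
        = - (\<Sum>S\<in>Pow AA. (-1) ^ card (AA - S) * real (card (AA - S)) * exp (real (card S) * s))"
      unfolding sum_negf[symmetric]
    proof (intro sum.cong refl)
      fix S assume "S \<in> Pow AA"
      then have "S \<subseteq> AA" by auto
      then have "card (AA - S) = n - card S" "card S \<le> n"
        by (auto simp: card_Diff_subset finite_subset card_mono[of AA S, simplified])
      then show "ww S * ((real (card S) - real n) * exp (real (card S) * s)) =
          - ((-1) ^ card (AA - S) * real (card (AA - S)) * exp (real (card S) * s))"
        by (simp add: ww_def of_nat_diff algebra_simps)
    qed
    also have "\<dots> = real n * (exp s - 1) ^ (n - 1)"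
      using deriv_alt_sum[of AA s] by simp
    finally show ?thesis .
  qed
  have fin: "exp (- real n * s) * (real n * (exp s - 1) ^ (n - 1)) = Hd n s"
  proof -
    have e: "exp (- real n * s) = exp (- s) * exp (- s) ^ (n - 1)"
    proof -
      have "exp (- s) * exp (- s) ^ (n - 1) = exp (- s) ^ n"
        using n_pos by (cases n) auto
      also have "\<dots> = exp (- real n * s)" by (simp add: exp_of_nat_mult[symmetric])
      finally show ?thesis by simp
    qed
    have "exp (- s) ^ (n - 1) * (exp s - 1) ^ (n - 1) = (1 - exp (- s)) ^ (n - 1)"
      by (simp add: power_mult_distrib[symmetric] right_diff_distrib exp_minus field_simps)
    then show ?thesis using s unfolding Hd_def e by (simp add: mult_ac)
  qed
  show ?thesis
    using sums_mult[OF S, of "exp (- real n * s)"] unfolding trm[symmetric] val fin .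
qed

lemma erl_zero: "s < 0 \<Longrightarrow> erlang_density j l s = 0"
  by (simp add: erlang_density_def)

lemma Hd_zero: "s < 0 \<Longrightarrow> Hd n s = 0"
  by (simp add: Hd_def)

lemma nn_mix_mean:
  "(\<integral>\<^sup>+s. ennreal (Hd n s * s) \<partial>lborel) = (\<Sum>j. ennreal (p (Suc j) * real (Suc j) / real n))"
proof -
  have pw: "ennreal (Hd n s * s) = (\<Sum>j. ennreal (p (Suc j) * erlang_density j (real n) s * s))" for s
  proof (cases "s < 0")
    case True then show ?thesis by (simp add: erl_zero Hd_zero)
  next
    case False
    then have sm: "(\<lambda>j. p (Suc j) * erlang_density j (real n) s * s) sums (Hd n s * s)"
      using sums_mult2[OF series_Hd] by simp
    have "(\<Sum>j. ennreal (p (Suc j) * erlang_density j (real n) s * s)) = ennreal (\<Sum>j. p (Suc j) * erlang_density j (real n) s * s)"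
      using False sm by (intro suminf_ennreal2) (auto simp: p_nonneg sums_summable)
    then show ?thesis using sm by (simp add: sums_unique[symmetric])
  qed
  have "(\<integral>\<^sup>+s. ennreal (Hd n s * s) \<partial>lborel) = (\<integral>\<^sup>+s. (\<Sum>j. ennreal (p (Suc j) * erlang_density j (real n) s * s)) \<partial>lborel)"
    by (simp add: pw)
  also have "\<dots> = (\<Sum>j. \<integral>\<^sup>+s. ennreal (p (Suc j) * erlang_density j (real n) s * s) \<partial>lborel)"
    by (rule nn_integral_suminf) auto
  also have "\<dots> = (\<Sum>j. ennreal (p (Suc j) * real (Suc j) / real n))"
  proof (intro suminf_cong)
    fix j
    have "(\<integral>\<^sup>+s. ennreal (p (Suc j) * erlang_density j (real n) s * s) \<partial>lborel)
        = (\<integral>\<^sup>+s. ennreal (p (Suc j)) * ennreal (erlang_density j (real n) s * s ^ 1) \<partial>lborel)"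
      by (intro nn_integral_cong) (auto simp: ennreal_mult' p_nonneg mult.assoc)
    also have "\<dots> = ennreal (p (Suc j)) * (\<integral>\<^sup>+s. ennreal (erlang_density j (real n) s * s ^ 1) \<partial>lborel)"
      by (rule nn_integral_cmult) auto
    also have "\<dots> = ennreal (p (Suc j)) * ennreal (fact (j + 1) / (fact j * real n ^ 1))"
      using n_pos by (subst nn_integral_erlang_ith_moment) auto
    also have "fact (j + 1) / (fact j * real n ^ 1) = real (Suc j) / real n"
      by (simp add: fact_Suc del: of_nat_Suc)
    also have "ennreal (p (Suc j)) * ennreal (real (Suc j) / real n) = ennreal (p (Suc j) * (real (Suc j) / real n))"
      by (rule ennreal_mult'[symmetric]) (rule p_nonneg)
    also have "p (Suc j) * (real (Suc j) / real n) = p (Suc j) * real (Suc j) / real n"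
      by simp
    finally show "(\<integral>\<^sup>+s. ennreal (p (Suc j) * erlang_density j (real n) s * s) \<partial>lborel) = ennreal (p (Suc j) * real (Suc j) / real n)" .
  qed
  finally show ?thesis .
qed

lemma nn_mix_mean_bound:
  "(\<integral>\<^sup>+s. ennreal (Hd n s * s) \<partial>lborel) \<le> ennreal (ln (real n) + 3)"
proof -
  interpret G: prob_space gumbel_law by (rule gumbel_prob)
  have "(\<integral>\<^sup>+s. ennreal (Hd n s * s) \<partial>lborel) = (\<integral>\<^sup>+s. ennreal s \<partial>density lborel (\<lambda>s. ennreal (Hd n s)))"
    by (subst nn_integral_density) (auto simp: ennreal_mult' Hd_nonneg intro!: nn_integral_cong)
  also have "\<dots> = (\<integral>\<^sup>+x. ennreal (psi n x) \<partial>gumbel_law)"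
    using n_pos by (simp add: Hd_distr nn_integral_distr)
  also have "\<dots> \<le> (\<integral>\<^sup>+x. ennreal (ln (real n)) + ennreal \<bar>x\<bar> + ennreal (exp (- x)) \<partial>gumbel_law)"
  proof (intro nn_integral_mono)
    fix x
    have "psi n x \<le> ln (real n) + x + exp (- x) / real n"
      using psi_approx[of n x] n_pos by simp
    also have "exp (- x) / real n \<le> exp (- x)"
      using n_pos by (simp add: divide_le_eq)
    finally have "psi n x \<le> ln (real n) + \<bar>x\<bar> + exp (- x)" by simp
    then have "ennreal (psi n x) \<le> ennreal (ln (real n) + \<bar>x\<bar> + exp (- x))"
      by (rule ennreal_leI)
    also have "\<dots> = ennreal (ln (real n)) + ennreal \<bar>x\<bar> + ennreal (exp (- x))"
      using n_pos by (simp add: ennreal_plus)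
    finally show "ennreal (psi n x) \<le> ennreal (ln (real n)) + ennreal \<bar>x\<bar> + ennreal (exp (- x))" .
  qed
  also have "\<dots> = (\<integral>\<^sup>+x. ennreal (ln (real n)) + ennreal \<bar>x\<bar> \<partial>gumbel_law) + (\<integral>\<^sup>+x. ennreal (exp (- x)) \<partial>gumbel_law)"
    by (rule nn_integral_add) auto
  also have "\<dots> = ennreal (ln (real n)) + (\<integral>\<^sup>+x. ennreal \<bar>x\<bar> \<partial>gumbel_law) + 1"
  proof -
    have "(\<integral>\<^sup>+x. ennreal (ln (real n)) + ennreal \<bar>x\<bar> \<partial>gumbel_law) = (\<integral>\<^sup>+x. ennreal (ln (real n)) \<partial>gumbel_law) + (\<integral>\<^sup>+x. ennreal \<bar>x\<bar> \<partial>gumbel_law)"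
      by (rule nn_integral_add) auto
    moreover have "(\<integral>\<^sup>+x. ennreal (ln (real n)) \<partial>gumbel_law) = ennreal (ln (real n))"
      using G.emeasure_space_1 by simp
    ultimately show ?thesis using gumbel_exp_moment by simp
  qed
  also have "\<dots> \<le> ennreal (ln (real n)) + 2 + 1"
    using gumbel_abs_moment by (intro add_mono order_refl) auto
  also have "\<dots> = ennreal (ln (real n) + 3)"
    using n_pos by (simp add: ennreal_plus[symmetric])
  finally show ?thesis .
qed

lemma summable_pmean: "summable (\<lambda>j. p (Suc j) * real (Suc j) / real n)"
  and pmean_bound: "(\<Sum>j. p (Suc j) * real (Suc j) / real n) \<le> ln (real n) + 3"
proof -
  have le: "(\<Sum>j. ennreal (p (Suc j) * real (Suc j) / real n)) \<le> ennreal (ln (real n) + 3)"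
    using nn_mix_mean nn_mix_mean_bound by simp
  have nt: "(\<Sum>j. ennreal (p (Suc j) * real (Suc j) / real n)) \<noteq> top"
    using le by (metis neq_top_trans ennreal_neq_top)
  show sm: "summable (\<lambda>j. p (Suc j) * real (Suc j) / real n)"
    by (rule summable_suminf_not_top[OF _ nt]) (simp add: p_nonneg)
  have eq: "(\<Sum>j. ennreal (p (Suc j) * real (Suc j) / real n)) = ennreal (\<Sum>j. p (Suc j) * real (Suc j) / real n)"
    by (rule suminf_ennreal2[OF _ sm]) (simp add: p_nonneg)
  have "ennreal (\<Sum>j. p (Suc j) * real (Suc j) / real n) \<le> ennreal (ln (real n) + 3)"
    using le unfolding eq .
  then show "(\<Sum>j. p (Suc j) * real (Suc j) / real n) \<le> ln (real n) + 3"
    using n2 by (subst (asm) ennreal_le_iff) auto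
qed

end


locale lipf =
  fixes f f' :: "real \<Rightarrow> real"
  assumes lip: "\<And>x y. \<bar>f x - f y\<bar> \<le> \<bar>x - y\<bar>"
    and der: "\<And>x. (f has_real_derivative f' x) (at x)"
    and lip': "\<And>x y. \<bar>f' x - f' y\<bar> \<le> \<bar>x - y\<bar>"
begin

lemma f_borel[measurable]: "f \<in> borel_measurable borel"
proof -
  have "continuous_on UNIV f"
    using der by (auto intro!: continuous_at_imp_continuous_on DERIV_isCont)
  then show ?thesis by (rule borel_measurable_continuous_onI)
qed

lemma taylor: "\<bar>f y - f x - f' x * (y - x)\<bar> \<le> (y - x)^2 / 2"
proof -
  define phi where "phi t = f t - f x - f' x * (t - x) - (t - x)^2 / 2" for t
  define chi where "chi t = f t - f x - f' x * (t - x) + (t - x)^2 / 2" for t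
  have dphi: "(phi has_real_derivative (f' t - f' x - (t - x))) (at t)" for t
    unfolding phi_def by (auto intro!: derivative_eq_intros der simp: field_simps)
  have dchi: "(chi has_real_derivative (f' t - f' x + (t - x))) (at t)" for t
    unfolding chi_def by (auto intro!: derivative_eq_intros der simp: field_simps)
  have "phi y \<le> 0 \<and> 0 \<le> chi y"
  proof (cases "x \<le> y")
    case True
    have "phi y \<le> phi x"
    proof (rule DERIV_nonpos_imp_nonincreasing[OF True])
      fix t assume "x \<le> t" "t \<le> y"
      then show "\<exists>d. (phi has_real_derivative d) (at t) \<and> d \<le> 0"
        using dphi[of t] lip'[of t x] by (intro exI[of _ "f' t - f' x - (t - x)"]) auto
    qed
    moreover have "chi x \<le> chi y"
    proof (rule DERIV_nonneg_imp_nondecreasing[OF True])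
      fix t assume "x \<le> t" "t \<le> y"
      then show "\<exists>d. (chi has_real_derivative d) (at t) \<and> 0 \<le> d"
        using dchi[of t] lip'[of t x] by (intro exI[of _ "f' t - f' x + (t - x)"]) auto
    qed
    ultimately show ?thesis by (simp add: phi_def chi_def)
  next
    case False
    then have yx: "y \<le> x" by simp
    have "phi y \<le> phi x"
    proof (rule DERIV_nonneg_imp_nondecreasing[OF yx])
      fix t assume "y \<le> t" "t \<le> x"
      then show "\<exists>d. (phi has_real_derivative d) (at t) \<and> 0 \<le> d"
        using dphi[of t] lip'[of t x] by (intro exI[of _ "f' t - f' x - (t - x)"]) auto
    qed
    moreover have "chi x \<le> chi y"
    proof (rule DERIV_nonpos_imp_nonincreasing[OF yx])
      fix t assume "y \<le> t" "t \<le> x"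
      then show "\<exists>d. (chi has_real_derivative d) (at t) \<and> d \<le> 0"
        using dchi[of t] lip'[of t x] by (intro exI[of _ "f' t - f' x + (t - x)"]) auto
    qed
    ultimately show ?thesis by (simp add: phi_def chi_def)
  qed
  then have "f y - f x - f' x * (y - x) \<le> (y - x)^2 / 2" "- (f y - f x - f' x * (y - x)) \<le> (y - x)^2 / 2"
    by (simp_all add: phi_def chi_def)
  then show ?thesis by (rule abs_leI)
qed

lemma f_bound: "\<bar>f x\<bar> \<le> \<bar>f c\<bar> + \<bar>x - c\<bar>"
  using lip[of x c] by linarith

lemma erl_moment:
  assumes l: "0 < l"
  shows "has_bochner_integral lborel (\<lambda>s. erlang_density k l s * s ^ i) (fact (k + i) / (fact k * l ^ i))"
proof (rule has_bochner_integral_nn_integral)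
  show "AE x in lborel. 0 \<le> erlang_density k l x * x ^ i"
    using l by (auto simp: erlang_density_def)
  show "(\<integral>\<^sup>+x. ennreal (erlang_density k l x * x ^ i) \<partial>lborel) = ennreal (fact (k + i) / (fact k * l ^ i))"
    using l by (rule nn_integral_erlang_ith_moment)
qed (use l in auto)

lemma erl_int_f:
  assumes l: "0 < l"
  shows "integrable lborel (\<lambda>s. erlang_density k l s * f (s - c))"
proof (rule Bochner_Integration.integrable_bound)
  have "integrable lborel (\<lambda>s. \<bar>f (- c)\<bar> * (erlang_density k l s * s ^ 0) + erlang_density k l s * s ^ 1)"
    using integrable.intros[OF erl_moment[OF l, of k 0]] integrable.intros[OF erl_moment[OF l, of k 1]]
    by (auto intro!: integrable_add integrable_mult_right)
  then show "integrable lborel (\<lambda>s. \<bar>f (- c)\<bar> * (erlang_density k l s * s ^ 0) + erlang_density k l s * s ^ 1)" .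
  show "(\<lambda>s. erlang_density k l s * f (s - c)) \<in> borel_measurable lborel" by measurable
  show "AE x in lborel. norm (erlang_density k l x * f (x - c)) \<le> norm (\<bar>f (- c)\<bar> * (erlang_density k l x * x ^ 0) + erlang_density k l x * x ^ 1)"
  proof (rule AE_I2)
    fix x
    show "norm (erlang_density k l x * f (x - c)) \<le> norm (\<bar>f (- c)\<bar> * (erlang_density k l x * x ^ 0) + erlang_density k l x * x ^ 1)"
    proof (cases "x < 0")
      case True then show ?thesis by (simp add: erlang_density_def)
    next
      case False
      have e: "0 \<le> erlang_density k l x" using l by simp
      have "\<bar>f (x - c)\<bar> \<le> \<bar>f (- c)\<bar> + x" using f_bound[of "x - c" "- c"] False by simp
      then have "erlang_density k l x * \<bar>f (x - c)\<bar> \<le> erlang_density k l x * (\<bar>f (- c)\<bar> + x)"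
        using e by (rule mult_left_mono)
      then show ?thesis using e False by (simp add: abs_mult algebra_simps)
    qed
  qed
qed

lemma erl_taylor:
  fixes k :: nat and l c :: real
  assumes l: "0 < l"
  shows "\<bar>(\<integral>s. erlang_density k l s * f (s - c) \<partial>lborel) - f (real (Suc k) / l - c)\<bar> \<le> real (Suc k) / (2 * l ^ 2)"
proof -
  define mu where "mu = real (Suc k) / l"
  let ?e = "erlang_density k l"
  define A where "A = (\<integral>s. ?e s * f (s - c) \<partial>lborel)"
  have m0: "has_bochner_integral lborel (\<lambda>s. ?e s * s ^ 0) 1"
    using erl_moment[OF l, of k 0] by simp
  have m1: "has_bochner_integral lborel (\<lambda>s. ?e s * s ^ 1) mu"
    using erl_moment[OF l, of k 1] by (simp add: mu_def fact_Suc del: of_nat_Suc)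
  have m2: "has_bochner_integral lborel (\<lambda>s. ?e s * s ^ 2) (real (Suc k) * real (Suc (Suc k)) / l ^ 2)"
  proof -
    have "fact (k + 2) / (fact k * l ^ 2) = real (Suc k) * real (Suc (Suc k)) / l ^ 2"
      by (simp add: fact_Suc numeral_2_eq_2 del: of_nat_Suc)
    then show ?thesis using erl_moment[OF l, of k 2] by (simp add: algebra_simps)
  qed
  have If: "has_bochner_integral lborel (\<lambda>s. ?e s * f (s - c)) A"
    using erl_int_f[OF l, of k c] by (simp add: has_bochner_integral_iff A_def)
  define u where "u s = ?e s * f (s - c) - f (mu - c) * (?e s * s ^ 0) - f' (mu - c) * (?e s * s ^ 1 - mu * (?e s * s ^ 0))" for s
  have Iu: "has_bochner_integral lborel u (A - f (mu - c) * 1 - f' (mu - c) * (mu - mu * 1))"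
    unfolding u_def
    by (intro has_bochner_integral_diff has_bochner_integral_mult_right If m0 m1)
  define B where "B s = (1/2) * (?e s * s ^ 2 - 2 * mu * (?e s * s ^ 1) + mu ^ 2 * (?e s * s ^ 0))" for s
  have IB: "has_bochner_integral lborel B ((1/2) * (real (Suc k) * real (Suc (Suc k)) / l ^ 2 - 2 * mu * mu + mu ^ 2 * 1))"
    unfolding B_def
    by (intro has_bochner_integral_diff has_bochner_integral_add has_bochner_integral_mult_right m0 m1 m2)
  have Bval: "(1/2) * (real (Suc k) * real (Suc (Suc k)) / l ^ 2 - 2 * mu * mu + mu ^ 2 * 1) = real (Suc k) / (2 * l ^ 2)"
    using l by (simp add: mu_def field_simps power2_eq_square)
  have pw: "\<bar>u s\<bar> \<le> B s" for s
  proof -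
    have "u s = ?e s * (f (s - c) - f (mu - c) - f' (mu - c) * ((s - c) - (mu - c)))"
      by (simp add: u_def algebra_simps)
    also have "\<bar>\<dots>\<bar> = ?e s * \<bar>f (s - c) - f (mu - c) - f' (mu - c) * ((s - c) - (mu - c))\<bar>"
      using l by (simp add: abs_mult)
    also have "\<dots> \<le> ?e s * (((s - c) - (mu - c))^2 / 2)"
      using l by (intro mult_left_mono taylor) auto
    also have "\<dots> = B s" unfolding B_def power2_eq_square by (simp add: field_simps)
    finally show ?thesis .
  qed
  have iu: "integrable lborel u" and iB: "integrable lborel B" using Iu IB by (auto intro: integrable.intros)
  have "integral\<^sup>L lborel u \<le> integral\<^sup>L lborel B"
    using pw by (intro integral_mono iu iB) (auto simp: abs_le_iff)
  moreover have "integral\<^sup>L lborel (\<lambda>s. - B s) \<le> integral\<^sup>L lborel u"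
    using pw by (intro integral_mono iu iB integrable_minus) (smt (verit) abs_le_iff)
  ultimately have "\<bar>integral\<^sup>L lborel u\<bar> \<le> integral\<^sup>L lborel B" by auto
  moreover have "integral\<^sup>L lborel u = A - f (mu - c)" using Iu by (simp add: has_bochner_integral_iff)
  moreover have "integral\<^sup>L lborel B = real (Suc k) / (2 * l ^ 2)"
    using IB unfolding Bval[symmetric] has_bochner_integral_iff by blast
  ultimately show ?thesis by (simp add: A_def mu_def)
qed

end


lemma (in prob_space) discrete_expect:
  fixes X :: "'a \<Rightarrow> nat" and F :: "nat \<Rightarrow> real"
  assumes X[measurable]: "X \<in> measurable M (count_space UNIV)"
    and sm: "summable (\<lambda>j. \<bar>F j\<bar> * measure M {w\<in>space M. X w = j})"
  shows "integral\<^sup>L M (\<lambda>w. F (X w)) = (\<Sum>j. F j * measure M {w\<in>space M. X w = j})"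
proof -
  define g where "g j w = F j * indicator {w\<in>space M. X w = j} w" for j w
  have ev: "{w\<in>space M. X w = j} \<in> sets M" for j by measurable
  have int: "integrable M (g j)" for j
    unfolding g_def using ev by (intro integrable_mult_right integrable_real_indicator) (auto simp: less_top[symmetric])
  have pt: "(\<Sum>j. g j w) = F (X w)" if "w \<in> space M" for w
  proof -
    have "g j w = (if j = X w then F j else 0)" for j using that by (auto simp: g_def)
    then show ?thesis using sums_single[of "X w" F] by (simp add: sums_iff)
  qed
  have "integral\<^sup>L M (\<lambda>w. F (X w)) = integral\<^sup>L M (\<lambda>w. \<Sum>j. g j w)"
    by (rule Bochner_Integration.integral_cong[OF refl]) (simp add: pt)
  also have "\<dots> = (\<Sum>j. integral\<^sup>L M (g j))"
  proof (rule integral_suminf)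
    show "integrable M (g j)" for j by (rule int)
    show "AE x in M. summable (\<lambda>j. norm (g j x))"
    proof (rule AE_I2)
      fix w assume "w \<in> space M"
      then have "norm (g j w) = (if j = X w then \<bar>F j\<bar> else 0)" for j by (auto simp: g_def)
      then show "summable (\<lambda>j. norm (g j w))" using sums_single[of "X w" "\<lambda>j. \<bar>F j\<bar>"] by (simp add: sums_iff)
    qed
    have "(\<integral>x. norm (g j x) \<partial>M) = \<bar>F j\<bar> * measure M {w\<in>space M. X w = j}" for j
    proof -
      have "(\<integral>x. norm (g j x) \<partial>M) = (\<integral>x. \<bar>F j\<bar> * indicator {w\<in>space M. X w = j} x \<partial>M)"
        by (intro Bochner_Integration.integral_cong refl) (auto simp: g_def abs_mult)
      also have "\<dots> = \<bar>F j\<bar> * measure M {w\<in>space M. X w = j}"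
        by (simp add: Int_absorb2)
      finally show ?thesis .
    qed
    then show "summable (\<lambda>j. \<integral>x. norm (g j x) \<partial>M)" using sm by simp
  qed
  also have "\<dots> = (\<Sum>j. F j * measure M {w\<in>space M. X w = j})"
  proof (intro suminf_cong)
    fix j
    have "g j = (\<lambda>w. F j * indicator {w\<in>space M. X w = j} w)" by (rule ext) (simp add: g_def)
    then show "integral\<^sup>L M (g j) = F j * measure M {w\<in>space M. X w = j}" by (simp add: Int_absorb2)
  qed
  finally show ?thesis .
qed

locale main = cc n + lipf f f' for n f f'
begin

abbreviation "LL \<equiv> ln (real n)"

definition Aj :: "nat \<Rightarrow> real" where
  "Aj j = (\<integral>s. erlang_density j (real n) s * f (s - LL) \<partial>lborel)"

lemma np: "0 < real n" using n_pos by simp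

lemma summable_pSuc: "summable (\<lambda>j. p (Suc j))"
proof -
  have "summable (\<lambda>j. real n * (p (Suc j) * real (Suc j) / real n))"
    by (intro summable_mult summable_pmean)
  moreover have "norm (p (Suc j)) \<le> real n * (p (Suc j) * real (Suc j) / real n)" for j
  proof -
    have "p (Suc j) * 1 \<le> p (Suc j) * real (Suc j)" by (rule mult_left_mono) (auto simp: p_nonneg)
    then show ?thesis using np p_nonneg[of "Suc j"] by simp
  qed
  ultimately show ?thesis
    by (rule summable_comparison_test'[where N=0])
qed

lemma summable_pmean': "summable (\<lambda>j. p (Suc j) * real (Suc j))"
proof -
  have "summable (\<lambda>j. real n * (p (Suc j) * real (Suc j) / real n))"
    by (intro summable_mult summable_pmean)
  then show ?thesis using np by simp
qed

lemma mix_sums: "(\<lambda>j. p (Suc j) * Aj j) sums (\<integral>s. Hd n s * f (s - LL) \<partial>lborel)"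
proof -
  define g where "g j s = p (Suc j) * (erlang_density j (real n) s * f (s - LL))" for j s
  have pt: "(\<Sum>j. g j s) = Hd n s * f (s - LL)" for s
  proof (cases "s < 0")
    case True then show ?thesis by (simp add: g_def erl_zero Hd_zero)
  next
    case False
    then show ?thesis using sums_mult2[OF series_Hd[of s], of "f (s - LL)"]
      by (simp add: g_def sums_iff mult.assoc)
  qed
  have bnd: "(\<integral>s. norm (g j s) \<partial>lborel) \<le> p (Suc j) * (\<bar>f (- LL)\<bar> + real (Suc j) / real n)" for j
  proof -
    have i1: "integrable lborel (\<lambda>s. \<bar>f (- LL)\<bar> * (erlang_density j (real n) s * s ^ 0) + erlang_density j (real n) s * s ^ 1)"
      using integrable.intros[OF erl_moment[OF np, of j 0]] integrable.intros[OF erl_moment[OF np, of j 1]]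
      by (auto intro!: integrable_add integrable_mult_right)
    have v1: "(\<integral>s. \<bar>f (- LL)\<bar> * (erlang_density j (real n) s * s ^ 0) + erlang_density j (real n) s * s ^ 1 \<partial>lborel)
        = \<bar>f (- LL)\<bar> * 1 + real (Suc j) / real n"
    proof -
      have h: "has_bochner_integral lborel (\<lambda>s. \<bar>f (- LL)\<bar> * (erlang_density j (real n) s * s ^ 0) + erlang_density j (real n) s * s ^ 1)
          (\<bar>f (- LL)\<bar> * (fact (j + 0) / (fact j * real n ^ 0)) + fact (j + 1) / (fact j * real n ^ 1))"
        by (intro has_bochner_integral_add has_bochner_integral_mult_right erl_moment np)
      have "fact (j + 1) / (fact j * real n ^ 1) = real (Suc j) / real n"
        by (simp add: fact_Suc del: of_nat_Suc)
      then show ?thesis using h by (simp add: has_bochner_integral_iff)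
    qed
    have "(\<integral>s. norm (g j s) \<partial>lborel) = p (Suc j) * (\<integral>s. erlang_density j (real n) s * \<bar>f (s - LL)\<bar> \<partial>lborel)"
      by (simp add: g_def abs_mult p_nonneg)
    also have "(\<integral>s. erlang_density j (real n) s * \<bar>f (s - LL)\<bar> \<partial>lborel) \<le>
        (\<integral>s. \<bar>f (- LL)\<bar> * (erlang_density j (real n) s * s ^ 0) + erlang_density j (real n) s * s ^ 1 \<partial>lborel)"
    proof (rule integral_mono)
      show "integrable lborel (\<lambda>s. erlang_density j (real n) s * \<bar>f (s - LL)\<bar>)"
        using integrable_abs[OF erl_int_f[OF np, of j LL]] by (simp add: abs_mult)
      show "integrable lborel (\<lambda>s. \<bar>f (- LL)\<bar> * (erlang_density j (real n) s * s ^ 0) + erlang_density j (real n) s * s ^ 1)"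
        by (rule i1)
      fix s :: real
      show "erlang_density j (real n) s * \<bar>f (s - LL)\<bar> \<le> \<bar>f (- LL)\<bar> * (erlang_density j (real n) s * s ^ 0) + erlang_density j (real n) s * s ^ 1"
      proof (cases "s < 0")
        case True then show ?thesis by (simp add: erl_zero)
      next
        case False
        have e: "0 \<le> erlang_density j (real n) s" using np by simp
        have "\<bar>f (s - LL)\<bar> \<le> \<bar>f (- LL)\<bar> + s" using f_bound[of "s - LL" "- LL"] False by simp
        then have "erlang_density j (real n) s * \<bar>f (s - LL)\<bar> \<le> erlang_density j (real n) s * (\<bar>f (- LL)\<bar> + s)"
          using e by (rule mult_left_mono)
        then show ?thesis by (simp add: algebra_simps)
      qed
    qed
    finally show ?thesis using v1 p_nonneg[of "Suc j"] by (simp add: mult_left_mono)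
  qed
  have sm: "summable (\<lambda>j. p (Suc j) * (\<bar>f (- LL)\<bar> + real (Suc j) / real n))"
    using summable_add[OF summable_mult2[OF summable_pSuc, of "\<bar>f (- LL)\<bar>"] summable_pmean]
    by (simp add: algebra_simps)
  have "(\<lambda>j. integral\<^sup>L lborel (g j)) sums (\<integral>s. (\<Sum>j. g j s) \<partial>lborel)"
  proof (rule sums_integral)
    show "integrable lborel (g j)" for j
      unfolding g_def by (intro integrable_mult_right erl_int_f np)
    show "AE x in lborel. summable (\<lambda>j. norm (g j x))"
    proof (rule AE_I2)
      fix s :: real
      show "summable (\<lambda>j. norm (g j s))"
      proof (cases "s < 0")
        case True then show ?thesis by (simp add: g_def erl_zero)
      next
        case False
        have "summable (\<lambda>j. p (Suc j) * erlang_density j (real n) s * \<bar>f (s - LL)\<bar>)"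
          by (intro summable_mult2 sums_summable[OF series_Hd]) (use False in simp)
        then show ?thesis by (simp add: g_def abs_mult p_nonneg mult.assoc mult.left_commute)
      qed
    qed
    show "summable (\<lambda>j. \<integral>s. norm (g j s) \<partial>lborel)"
      by (rule summable_comparison_test'[OF sm, where N=0]) (use bnd in auto)
  qed
  moreover have "integral\<^sup>L lborel (g j) = p (Suc j) * Aj j" for j
  proof -
    have "g j = (\<lambda>s. p (Suc j) * (erlang_density j (real n) s * f (s - LL)))" by (rule ext) (simp add: g_def)
    then show ?thesis by (simp add: Aj_def)
  qed
  ultimately show ?thesis unfolding pt by simp
qed

lemma mix_gumbel: "(\<integral>s. Hd n s * f (s - LL) \<partial>lborel) = (\<integral>x. f (psi n x - LL) \<partial>gumbel_law)"
proof -
  have "(\<integral>s. Hd n s * f (s - LL) \<partial>lborel) = integral\<^sup>L (density lborel (\<lambda>s. ennreal (Hd n s))) (\<lambda>s. f (s - LL))"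
    by (subst integral_density) (auto simp: Hd_nonneg)
  also have "\<dots> = integral\<^sup>L (distr gumbel_law borel (psi n)) (\<lambda>s. f (s - LL))"
    using n_pos by (simp add: Hd_distr)
  also have "\<dots> = (\<integral>x. f (psi n x - LL) \<partial>gumbel_law)"
    by (subst integral_distr) auto
  finally show ?thesis .
qed

lemma gumbel_int_abs: "integrable gumbel_law (\<lambda>x. \<bar>x\<bar>)"
proof -
  have "(\<integral>\<^sup>+x. ennreal \<bar>x\<bar> \<partial>gumbel_law) \<le> ennreal 2" using gumbel_abs_moment by simp
  then have "(\<integral>\<^sup>+x. ennreal \<bar>x\<bar> \<partial>gumbel_law) < top" using ennreal_less_top[of 2] by (rule le_less_trans)
  then show ?thesis by (intro integrableI_bounded) auto
qed

lemma gumbel_int_exp: "integrable gumbel_law (\<lambda>x. exp (- x))"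
  by (rule integrableI_bounded) (use gumbel_exp_moment in auto)

lemma gumbel_exp_int: "(\<integral>x. exp (- x) \<partial>gumbel_law) = 1"
  using gumbel_exp_moment gumbel_int_exp
  by (subst (asm) nn_integral_eq_integral) (auto simp: ennreal_eq_1)

lemma gumbel_part: "\<bar>(\<integral>x. f (psi n x - LL) \<partial>gumbel_law) - (\<integral>x. f x \<partial>gumbel_law)\<bar> \<le> 1 / real n"
proof -
  interpret G: prob_space gumbel_law by (rule gumbel_prob)
  have intf: "integrable gumbel_law f"
  proof (rule Bochner_Integration.integrable_bound)
    show "integrable gumbel_law (\<lambda>x. \<bar>f 0\<bar> + \<bar>x\<bar>)"
      by (intro Bochner_Integration.integrable_add gumbel_int_abs G.integrable_const)
    show "AE x in gumbel_law. norm (f x) \<le> norm (\<bar>f 0\<bar> + \<bar>x\<bar>)"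
      using f_bound[of _ 0] by auto
  qed auto
  have pw: "\<bar>f (psi n x - LL) - f x\<bar> \<le> exp (- x) / real n" for x
    using lip[of "psi n x - LL" x] psi_approx[of n x] n_pos by simp
  have intg: "integrable gumbel_law (\<lambda>x. f (psi n x - LL))"
  proof (rule Bochner_Integration.integrable_bound)
    show "integrable gumbel_law (\<lambda>x. \<bar>f x\<bar> + exp (- x) / real n)"
      by (intro Bochner_Integration.integrable_add integrable_divide gumbel_int_exp integrable_abs intf)
    show "AE x in gumbel_law. norm (f (psi n x - LL)) \<le> norm (\<bar>f x\<bar> + exp (- x) / real n)"
    proof (rule AE_I2)
      fix x
      show "norm (f (psi n x - LL)) \<le> norm (\<bar>f x\<bar> + exp (- x) / real n)"
        using pw[of x] n_pos by auto
    qed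
  qed auto
  have "\<bar>(\<integral>x. f (psi n x - LL) \<partial>gumbel_law) - (\<integral>x. f x \<partial>gumbel_law)\<bar> = \<bar>\<integral>x. f (psi n x - LL) - f x \<partial>gumbel_law\<bar>"
    using intf intg by simp
  also have "\<dots> \<le> (\<integral>x. \<bar>f (psi n x - LL) - f x\<bar> \<partial>gumbel_law)"
    by (rule integral_abs_bound)
  also have "\<dots> \<le> (\<integral>x. exp (- x) / real n \<partial>gumbel_law)"
    by (intro integral_mono integrable_abs Bochner_Integration.integrable_diff intf intg integrable_divide gumbel_int_exp pw)
  also have "\<dots> = 1 / real n" using gumbel_exp_int by simp
  finally show ?thesis .
qed

end


context main
begin

lemma sm_bound: "summable (\<lambda>j. p (Suc j) * (\<bar>f (- LL)\<bar> + real (Suc j) / real n))"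
  using summable_add[OF summable_mult2[OF summable_pSuc, of "\<bar>f (- LL)\<bar>"] summable_pmean]
  by (simp add: algebra_simps)

lemma Zn_int: "integral\<^sup>L (Zn_law n) f = (\<Sum>j. p (Suc j) * f (real (Suc j) / real n - LL))"
proof -
  define F where "F j = f (real j / real n - LL)" for j
  have "integral\<^sup>L (Zn_law n) f = integral\<^sup>L MM (\<lambda>w. F (TT w))"
    unfolding Zn_law_def F_def by (subst integral_distr) auto
  also have "\<dots> = (\<Sum>j. F j * p j)"
    unfolding p_def
  proof (rule P.discrete_expect[OF T_meas])
    have "summable (\<lambda>j. \<bar>F (Suc j)\<bar> * p (Suc j))"
    proof (rule summable_comparison_test'[OF sm_bound, where N=0])
      fix j
      have "\<bar>F (Suc j)\<bar> \<le> \<bar>f (- LL)\<bar> + real (Suc j) / real n"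
        using f_bound[of "real (Suc j) / real n - LL" "- LL"] np by (simp add: F_def)
      then have "\<bar>F (Suc j)\<bar> * p (Suc j) \<le> (\<bar>f (- LL)\<bar> + real (Suc j) / real n) * p (Suc j)"
        by (rule mult_right_mono[OF _ p_nonneg])
      then show "norm (\<bar>F (Suc j)\<bar> * p (Suc j)) \<le> p (Suc j) * (\<bar>f (- LL)\<bar> + real (Suc j) / real n)"
        using p_nonneg[of "Suc j"] by (simp only: real_norm_def abs_mult abs_abs abs_of_nonneg mult.commute)
    qed
    then show "summable (\<lambda>j. \<bar>F j\<bar> * measure MM {w \<in> space MM. TT w = j})"
      unfolding p_def[symmetric] by (subst summable_Suc_iff[symmetric])
  qed
  also have "\<dots> = (\<Sum>j. F (Suc j) * p (Suc j))"
  proof -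
    have "summable (\<lambda>j. F (Suc j) * p (Suc j))"
    proof (rule summable_comparison_test'[OF sm_bound, where N=0])
      fix j
      have "\<bar>F (Suc j)\<bar> \<le> \<bar>f (- LL)\<bar> + real (Suc j) / real n"
        using f_bound[of "real (Suc j) / real n - LL" "- LL"] np by (simp add: F_def)
      then have "\<bar>F (Suc j)\<bar> * p (Suc j) \<le> (\<bar>f (- LL)\<bar> + real (Suc j) / real n) * p (Suc j)"
        by (rule mult_right_mono[OF _ p_nonneg])
      then show "norm (F (Suc j) * p (Suc j)) \<le> p (Suc j) * (\<bar>f (- LL)\<bar> + real (Suc j) / real n)"
        using p_nonneg[of "Suc j"] by (simp only: real_norm_def abs_mult abs_abs abs_of_nonneg mult.commute)
    qed
    then have "summable (\<lambda>j. F j * p j)" by (subst summable_Suc_iff[symmetric])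
    then show ?thesis by (subst suminf_split_head) (auto simp: p_formula)
  qed
  finally show ?thesis by (simp add: F_def mult.commute)
qed

lemma key: "integral\<^sup>L (Zn_law n) f - integral\<^sup>L gumbel_law f \<le> (LL + 3) / (2 * real n) + 1 / real n"
proof -
  define a where "a = (\<lambda>j. p (Suc j) * f (real (Suc j) / real n - LL))"
  define b where "b = (\<lambda>j. p (Suc j) * Aj j)"
  define c where "c = (\<lambda>j. (1 / (2 * real n)) * (p (Suc j) * real (Suc j) / real n))"
  have sa: "summable a"
  proof (rule summable_comparison_test'[OF sm_bound, where N=0])
    fix j
    have "\<bar>f (real (Suc j) / real n - LL)\<bar> \<le> \<bar>f (- LL)\<bar> + real (Suc j) / real n"
      using f_bound[of "real (Suc j) / real n - LL" "- LL"] np by simp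
    then show "norm (a j) \<le> p (Suc j) * (\<bar>f (- LL)\<bar> + real (Suc j) / real n)"
      using p_nonneg[of "Suc j"] by (simp add: a_def abs_mult mult_left_mono)
  qed
  have sb: "b sums (\<integral>x. f (psi n x - LL) \<partial>gumbel_law)"
    using mix_sums mix_gumbel by (simp add: b_def)
  have sc: "summable c" unfolding c_def by (intro summable_mult summable_pmean)
  have abc: "\<bar>a j - b j\<bar> \<le> c j" for j
  proof -
    have "\<bar>a j - b j\<bar> = p (Suc j) * \<bar>Aj j - f (real (Suc j) / real n - LL)\<bar>"
      by (simp add: a_def b_def abs_mult p_nonneg right_diff_distrib[symmetric] abs_minus_commute)
    also have "\<dots> \<le> p (Suc j) * (real (Suc j) / (2 * real n ^ 2))"
      unfolding Aj_def by (intro mult_left_mono erl_taylor np p_nonneg)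
    also have "\<dots> = c j" using np by (simp add: c_def power2_eq_square)
    finally show ?thesis .
  qed
  have sab: "summable (\<lambda>j. a j - b j)" using sa sums_summable[OF sb] by (rule summable_diff)
  have "(\<Sum>j. a j - b j) \<le> (\<Sum>j. c j)"
    using abc by (intro suminf_le sab sc) (simp add: abs_le_iff)
  also have "(\<Sum>j. c j) = (1 / (2 * real n)) * (\<Sum>j. p (Suc j) * real (Suc j) / real n)"
    unfolding c_def by (rule suminf_mult[OF summable_pmean])
  also have "\<dots> \<le> (1 / (2 * real n)) * (LL + 3)"
    using np by (intro mult_left_mono pmean_bound) auto
  finally have d1: "(\<Sum>j. a j) - (\<Sum>j. b j) \<le> (LL + 3) / (2 * real n)"
    using suminf_diff[OF sa sums_summable[OF sb]] by simp
  have "integral\<^sup>L (Zn_law n) f - integral\<^sup>L gumbel_law f =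
      ((\<Sum>j. a j) - (\<Sum>j. b j)) + ((\<integral>x. f (psi n x - LL) \<partial>gumbel_law) - integral\<^sup>L gumbel_law f)"
    using Zn_int sums_unique[OF sb] by (simp add: a_def)
  also have "\<dots> \<le> (LL + 3) / (2 * real n) + 1 / real n"
    using d1 gumbel_part by (intro add_mono) auto
  finally show ?thesis .
qed

lemma final_bound: "integral\<^sup>L (Zn_law n) f - integral\<^sup>L gumbel_law f \<le> 10 * LL / real n"
proof -
  have "ln 2 \<ge> (1/2 :: real)"
    using ln_le_minus_one[of "1/2"] by (simp add: ln_div)
  moreover have "ln 2 \<le> LL" using n2 by simp
  ultimately have L: "1/2 \<le> LL" by linarith
  have "(LL + 3) / (2 * real n) + 1 / real n = (LL + 5) / (2 * real n)"
    using np by (simp add: field_simps)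
  also have "\<dots> \<le> (20 * LL) / (2 * real n)"
    using np L by (intro divide_right_mono) auto
  also have "\<dots> = 10 * LL / real n" by simp
  finally show ?thesis using key by linarith
qed

end

lemma lip_from_seminorm:
  fixes h :: "real \<Rightarrow> real"
  assumes K: "lipschitz_on K UNIV h" and le: "lip_seminorm h \<le> 1"
  shows "\<bar>h x - h y\<bar> \<le> \<bar>x - y\<bar>"
proof (cases "x = y")
  case True then show ?thesis by simp
next
  case False
  let ?S = "{\<bar>h t - h s\<bar> / \<bar>t - s\<bar> | t s. t \<noteq> s}"
  have bdd: "bdd_above ?S"
  proof (rule bdd_aboveI)
    fix r assume "r \<in> ?S"
    then obtain t s where r: "r = \<bar>h t - h s\<bar> / \<bar>t - s\<bar>" "t \<noteq> s" by auto
    have "dist (h t) (h s) \<le> K * dist t s" using lipschitz_onD[OF K] by auto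
    then show "r \<le> K" using r by (simp add: dist_real_def divide_le_eq)
  qed
  have "\<bar>h x - h y\<bar> / \<bar>x - y\<bar> \<le> Sup ?S"
    by (rule cSup_upper) (use False bdd in auto)
  also have "\<dots> \<le> 1" using le by (simp add: lip_seminorm_def)
  finally show ?thesis using False by (simp add: divide_le_eq)
qed

lemma Lip2_lipf:
  assumes "f \<in> Lip2" "Lip2_norm f = 1"
  shows "\<exists>g. lipf f g"
proof -
  obtain K where K: "lipschitz_on K UNIV f" using assms(1) by (auto simp: Lip2_def)
  obtain g K' where g: "\<And>x. (f has_real_derivative g x) (at x)" and K': "lipschitz_on K' UNIV g"
    using assms(1) by (auto simp: Lip2_def)
  have dg: "deriv f = g" using g by (intro ext DERIV_imp_deriv)
  have l1: "lip_seminorm f \<le> 1" and l2: "lip_seminorm g \<le> 1"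
    using assms(2) by (auto simp: Lip2_norm_def dg max_def split: if_splits)
  show ?thesis
    by (intro exI[of _ g] lipf.intro lip_from_seminorm[OF K l1] lip_from_seminorm[OF K' l2] g)
qed

theorem theorem3p1:
  shows "\<exists>C>0. \<forall>n::nat. n \<ge> 2 \<longrightarrow>
           dist_Lip2 (Zn_law n) gumbel_law \<le> ereal (C * ln (real n) / real n)"
proof (intro exI[of _ 10] conjI allI impI)
  fix n :: nat assume n: "n \<ge> 2"
  show "dist_Lip2 (Zn_law n) gumbel_law \<le> ereal (10 * ln (real n) / real n)"
    unfolding dist_Lip2_def
  proof (rule SUP_least)
    fix f assume "f \<in> {f \<in> Lip2. Lip2_norm f = 1}"
    then obtain g where "lipf f g" using Lip2_lipf by blast
    then interpret main n f g by (intro main.intro cc.intro n)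
    show "ereal (integral\<^sup>L (Zn_law n) f - integral\<^sup>L gumbel_law f) \<le> ereal (10 * ln (real n) / real n)"
      using final_bound by simp
  qed
qed simp

end
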